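(* Let $D$ be a $3$-dicritical digraph. Then $D$ does not contain $O_4$ as a (not necessarily induced) subdigraph.
   Context: A $2$-dicolouring is a map to $\{1,2\}$ whose colour classes induce acyclic subdigraphs (a digon $xy,yx$ is a directed cycle). $D$ is $3$-dicritical if $D$ has no $2$-dicolouring but every proper subdigraph has one. $O_4$ is the digraph on vertices $u,v,x,y$ with arcs $xy,yx$ (a digon), $ux,uy$, $xv,yv$, and $uv$. "Contains as a subdigraph" means up to isomorphism. *)

theory Defs
  imports Main
begin

text \<open>A (finite, loopless) digraph is a pair (V, A) with A a set of arcs between
  vertices of V. Digons (both (x,y) and (y,x)) are allowed; parallel arcs are not
  representable (simple digraphs).\<close>

definition digraph :: "'a set \<Rightarrow> ('a \<times> 'a) set \<Rightarrow> bool" where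
  "digraph V A \<longleftrightarrow> finite V \<and> A \<subseteq> V \<times> V \<and> (\<forall>x. (x, x) \<notin> A)"

text \<open>The subdigraph induced by S is acyclic (a digon is a directed cycle).\<close>
definition induces_acyclic :: "('a \<times> 'a) set \<Rightarrow> 'a set \<Rightarrow> bool" where
  "induces_acyclic A S \<longleftrightarrow> acyclic (A \<inter> (S \<times> S))"

definition two_dicolouring :: "'a set \<Rightarrow> ('a \<times> 'a) set \<Rightarrow> ('a \<Rightarrow> nat) \<Rightarrow> bool" where
  "two_dicolouring V A c \<longleftrightarrow> (\<forall>v\<in>V. c v \<in> {1, 2}) \<and>
     (\<forall>i\<in>{1::nat, 2}. induces_acyclic A {v \<in> V. c v = i})"

definition two_dicolourable :: "'a set \<Rightarrow> ('a \<times> 'a) set \<Rightarrow> bool" where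
  "two_dicolourable V A \<longleftrightarrow> (\<exists>c. two_dicolouring V A c)"

definition subdigraph :: "'a set \<Rightarrow> ('a \<times> 'a) set \<Rightarrow> 'a set \<Rightarrow> ('a \<times> 'a) set \<Rightarrow> bool" where
  "subdigraph V' A' V A \<longleftrightarrow> V' \<subseteq> V \<and> A' \<subseteq> A \<and> A' \<subseteq> V' \<times> V'"

definition three_dicritical :: "'a set \<Rightarrow> ('a \<times> 'a) set \<Rightarrow> bool" where
  "three_dicritical V A \<longleftrightarrow> \<not> two_dicolourable V A \<and>
     (\<forall>V' A'. subdigraph V' A' V A \<and> (V', A') \<noteq> (V, A) \<longrightarrow> two_dicolourable V' A')"

definition contains_subdigraph ::
  "'b set \<Rightarrow> ('b \<times> 'b) set \<Rightarrow> 'a set \<Rightarrow> ('a \<times> 'a) set \<Rightarrow> bool" where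
  "contains_subdigraph VH AH V A \<longleftrightarrow>
     (\<exists>f. inj_on f VH \<and> f ` VH \<subseteq> V \<and> (\<forall>(a, b)\<in>AH. (f a, f b) \<in> A))"

text \<open>O_4 with u = 0, v = 1, x = 2, y = 3.\<close>
definition O4_V :: "nat set" where
  "O4_V = {0, 1, 2, 3}"

definition O4_A :: "(nat \<times> nat) set" where
  "O4_A = {(2, 3), (3, 2), (0, 2), (0, 3), (2, 1), (3, 1), (0, 1)}"

end

theory Submission
  imports Defs
begin

lemma acyc_mono: "acyclic R \<Longrightarrow> S \<subseteq> R\<^sup>+ \<Longrightarrow> acyclic S"
  unfolding acyclic_def
  by (metis trancl_id trans_trancl trancl_mono)

theorem lemma19:
  fixes V :: "'a set" and A :: "('a \<times> 'a) set"
  assumes "digraph V A"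
    and "three_dicritical V A"
  shows "\<not> contains_subdigraph O4_V O4_A V A"
proof
  assume "contains_subdigraph O4_V O4_A V A"
  then obtain f where inj: "inj_on f O4_V" and img: "f ` O4_V \<subseteq> V"
    and arcs: "\<forall>(a, b)\<in>O4_A. (f a, f b) \<in> A"
    unfolding contains_subdigraph_def by blast
  define u where "u = f 0"
  define v where "v = f 1"
  define x where "x = f 2"
  define y where "y = f 3"
  have inV: "u \<in> V" "v \<in> V" "x \<in> V" "y \<in> V"
    using img unfolding O4_V_def u_def v_def x_def y_def by auto
  have ne: "x \<noteq> u" "x \<noteq> v" "y \<noteq> u" "y \<noteq> v"
    using inj unfolding O4_V_def u_def v_def x_def y_def inj_on_def by auto
  have A: "(x,y) \<in> A" "(y,x) \<in> A" "(u,x) \<in> A" "(u,y) \<in> A" "(x,v) \<in> A" "(y,v) \<in> A" "(u,v) \<in> A"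
    using arcs unfolding O4_A_def u_def v_def x_def y_def by auto
  define A' where "A' = A - {(u,v)}"
  have "subdigraph V A' V A \<and> (V, A') \<noteq> (V, A)"
    using assms(1) A(7) unfolding subdigraph_def digraph_def A'_def by auto
  then have "two_dicolourable V A'" using assms(2) unfolding three_dicritical_def by blast
  then obtain c where c: "two_dicolouring V A' c" unfolding two_dicolourable_def by blast
  have cv: "\<And>w. w \<in> V \<Longrightarrow> c w \<in> {1,2}" using c unfolding two_dicolouring_def by blast
  have acA': "\<And>i. i \<in> {1::nat,2} \<Longrightarrow> acyclic (A' \<inter> ({w\<in>V. c w = i} \<times> {w\<in>V. c w = i}))"
    using c unfolding two_dicolouring_def induces_acyclic_def by blast
  have A': "(x,y) \<in> A'" "(y,x) \<in> A'" "(u,x) \<in> A'" "(u,y) \<in> A'" "(x,v) \<in> A'" "(y,v) \<in> A'"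
    using A ne unfolding A'_def by auto
  have cxy: "c x \<noteq> c y"
  proof
    assume eq: "c x = c y"
    let ?S = "{w\<in>V. c w = c x}"
    have "acyclic (A' \<inter> (?S \<times> ?S))" using acA' cv inV(3) by blast
    moreover have "(x,y) \<in> A' \<inter> (?S \<times> ?S)" "(y,x) \<in> A' \<inter> (?S \<times> ?S)"
      using A' inV eq by auto
    ultimately show False unfolding acyclic_def
      by (meson trancl.r_into_trancl trancl_into_trancl)
  qed
  have "two_dicolouring V A c"
    unfolding two_dicolouring_def induces_acyclic_def
  proof (intro conjI ballI)
    fix w assume "w \<in> V" then show "c w \<in> {1,2}" by (rule cv)
  next
    fix i :: nat assume i: "i \<in> {1,2}"
    let ?S = "{w\<in>V. c w = i}"
    have ac: "acyclic (A' \<inter> (?S \<times> ?S))" using acA' i .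
    show "acyclic (A \<inter> (?S \<times> ?S))"
    proof (rule acyc_mono[OF ac])
      show "A \<inter> (?S \<times> ?S) \<subseteq> (A' \<inter> (?S \<times> ?S))\<^sup>+"
      proof
        fix p assume p: "p \<in> A \<inter> (?S \<times> ?S)"
        show "p \<in> (A' \<inter> (?S \<times> ?S))\<^sup>+"
        proof (cases "p = (u,v)")
          case False
          then show ?thesis using p unfolding A'_def by auto
        next
          case True
          then have cu: "c u = i" "c v = i" using p by auto
          have "c x = i \<or> c y = i" using cxy cv[OF inV(3)] cv[OF inV(4)] i by auto
          then show ?thesis
          proof
            assume "c x = i"
            then have "(u,x) \<in> A' \<inter> (?S \<times> ?S)" "(x,v) \<in> A' \<inter> (?S \<times> ?S)"
              using A' inV cu by auto
            then show ?thesis using True by (meson trancl.r_into_trancl trancl_into_trancl)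
          next
            assume "c y = i"
            then have "(u,y) \<in> A' \<inter> (?S \<times> ?S)" "(y,v) \<in> A' \<inter> (?S \<times> ?S)"
              using A' inV cu by auto
            then show ?thesis using True by (meson trancl.r_into_trancl trancl_into_trancl)
          qed
        qed
      qed
    qed
  qed
  then show False using assms(2) unfolding three_dicritical_def two_dicolourable_def by blast
qed

end
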